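(* Let $G$ be a finite simple graph with a vertex $v$ such that $\deg(v)\leq k$, and let $m\ge 1$. Then the $(m-k-1)$-skeleton of $\mathrm{Hom}(G\setminus\{v\},K_m)$ is contained in $\mathrm{Hom}_{\{v\}}(G,K_m)$.
   Context: Graphs are finite, undirected and simple; $K_m$ is the complete graph on $m$ vertices; $G\setminus\{v\}$ is the induced subgraph on $V(G)\setminus\{v\}$. For graphs $G,H$, the homomorphism complex $\mathrm{Hom}(G,H)$ is the polyhedral complex whose cells are functions $\eta:V(G)\to 2^{V(H)}\setminus\{\varnothing\}$ such that whenever $\{x,y\}\in E(G)$ we have $\eta(x)\times\eta(y)\subseteq E(H)$; the cell $\eta$ is a product of simplices of dimension $\sum_{v\in V(G)}(|\eta(v)|-1)$, with $\eta\subseteq\tau$ iff $\eta(v)\subseteq\tau(v)$ for all $v$. For an independent set $I$ of $G$, $\mathrm{Hom}_I(G,H)$ is the subcomplex of $\mathrm{Hom}(G\setminus I,H)$ consisting of all cells $\eta\in\mathrm{Hom}(G\setminus I,H)$ for which there exists a cell $\overline{\eta}\in\mathrm{Hom}(G,H)$ with $\overline{\eta}|_{V(G)\setminus I}=\eta$. *)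

theory Defs
  imports Main
begin

definition simple_graph :: "'a set \<Rightarrow> ('a \<Rightarrow> 'a \<Rightarrow> bool) \<Rightarrow> bool" where
  "simple_graph V E \<longleftrightarrow> finite V \<and>
     (\<forall>x y. E x y \<longrightarrow> x \<in> V \<and> y \<in> V \<and> x \<noteq> y \<and> E y x)"

definition degree :: "'a set \<Rightarrow> ('a \<Rightarrow> 'a \<Rightarrow> bool) \<Rightarrow> 'a \<Rightarrow> nat" where
  "degree V E v = card {u \<in> V. E v u}"

definition K_verts :: "nat \<Rightarrow> nat set" where
  "K_verts m = {..<m}"

definition K_edges :: "nat \<Rightarrow> nat \<Rightarrow> bool" where
  "K_edges a b \<longleftrightarrow> a \<noteq> b"

definition induced_edges :: "'a set \<Rightarrow> ('a \<Rightarrow> 'a \<Rightarrow> bool) \<Rightarrow> 'a \<Rightarrow> 'a \<Rightarrow> bool" where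
  "induced_edges U E x y \<longleftrightarrow> x \<in> U \<and> y \<in> U \<and> E x y"

definition hom_cell :: "'a set \<Rightarrow> ('a \<Rightarrow> 'a \<Rightarrow> bool) \<Rightarrow> 'b set \<Rightarrow> ('b \<Rightarrow> 'b \<Rightarrow> bool)
    \<Rightarrow> ('a \<Rightarrow> 'b set) \<Rightarrow> bool" where
  "hom_cell V E W F \<eta> \<longleftrightarrow>
     (\<forall>x\<in>V. \<eta> x \<noteq> {} \<and> \<eta> x \<subseteq> W) \<and> (\<forall>x. x \<notin> V \<longrightarrow> \<eta> x = {}) \<and>
     (\<forall>x\<in>V. \<forall>y\<in>V. E x y \<longrightarrow> (\<forall>a\<in>\<eta> x. \<forall>b\<in>\<eta> y. F a b))"

definition Hom :: "'a set \<Rightarrow> ('a \<Rightarrow> 'a \<Rightarrow> bool) \<Rightarrow> 'b set \<Rightarrow> ('b \<Rightarrow> 'b \<Rightarrow> bool)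
    \<Rightarrow> ('a \<Rightarrow> 'b set) set" where
  "Hom V E W F = {\<eta>. hom_cell V E W F \<eta>}"

definition cell_dim :: "'a set \<Rightarrow> ('a \<Rightarrow> 'b set) \<Rightarrow> int" where
  "cell_dim V \<eta> = (\<Sum>x\<in>V. int (card (\<eta> x)) - 1)"

definition skeleton :: "int \<Rightarrow> 'a set \<Rightarrow> ('a \<Rightarrow> 'a \<Rightarrow> bool) \<Rightarrow> 'b set \<Rightarrow> ('b \<Rightarrow> 'b \<Rightarrow> bool)
    \<Rightarrow> ('a \<Rightarrow> 'b set) set" where
  "skeleton d V E W F = {\<eta> \<in> Hom V E W F. cell_dim V \<eta> \<le> d}"

definition Hom_I :: "'a set \<Rightarrow> 'a set \<Rightarrow> ('a \<Rightarrow> 'a \<Rightarrow> bool) \<Rightarrow> 'b set \<Rightarrow> ('b \<Rightarrow> 'b \<Rightarrow> bool)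
    \<Rightarrow> ('a \<Rightarrow> 'b set) set" where
  "Hom_I I V E W F = {\<eta> \<in> Hom (V - I) (induced_edges (V - I) E) W F.
      \<exists>\<eta>'. \<eta>' \<in> Hom V E W F \<and> (\<forall>x \<in> V - I. \<eta>' x = \<eta> x)}"

end

theory Submission
  imports Defs
begin

theorem lemma3p3:
  fixes V :: "'a set" and E :: "'a \<Rightarrow> 'a \<Rightarrow> bool" and v :: 'a and k m :: nat
  assumes "simple_graph V E"
    and "v \<in> V"
    and "degree V E v \<le> k"
    and "m \<ge> 1"
  shows "skeleton (int m - int k - 1) (V - {v}) (induced_edges (V - {v}) E) (K_verts m) K_edges
           \<subseteq> Hom_I {v} V E (K_verts m) K_edges"
proof
  fix \<eta> assume "\<eta> \<in> skeleton (int m - int k - 1) (V - {v}) (induced_edges (V - {v}) E) (K_verts m) K_edges"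
  hence hc: "hom_cell (V - {v}) (induced_edges (V - {v}) E) (K_verts m) K_edges \<eta>"
    and dim: "cell_dim (V - {v}) \<eta> \<le> int m - int k - 1"
    by (auto simp: skeleton_def Hom_def)
  have fin: "finite V" and sg: "\<And>x y. E x y \<Longrightarrow> x \<in> V \<and> y \<in> V \<and> x \<noteq> y \<and> E y x"
    using assms(1) by (auto simp: simple_graph_def)
  define N where "N = {u \<in> V. E v u}"
  have NV: "N \<subseteq> V - {v}" using sg by (auto simp: N_def)
  have finN: "finite N" using NV fin finite_subset by blast
  have cardN: "int (card N) \<le> int k" using assms(3) by (simp add: degree_def N_def)
  have sub: "\<And>x. x \<in> V - {v} \<Longrightarrow> \<eta> x \<noteq> {} \<and> \<eta> x \<subseteq> {..<m}"
    using hc by (auto simp: hom_cell_def K_verts_def)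
  have finx: "\<And>x. x \<in> V - {v} \<Longrightarrow> finite (\<eta> x)" using sub finite_subset by blast
  have pos: "\<And>x. x \<in> V - {v} \<Longrightarrow> 0 \<le> int (card (\<eta> x)) - 1"
    using sub finx by (simp add: Suc_leI card_gt_0_iff)
  have "(\<Sum>x\<in>N. int (card (\<eta> x)) - 1) \<le> (\<Sum>x\<in>V - {v}. int (card (\<eta> x)) - 1)"
    by (rule sum_mono2) (use fin NV pos in auto)
  also have "\<dots> \<le> int m - int k - 1" using dim by (simp add: cell_dim_def)
  finally have s1: "(\<Sum>x\<in>N. int (card (\<eta> x)) - 1) \<le> int m - int k - 1" .
  have "(\<Sum>x\<in>N. int (card (\<eta> x)) - 1) = (\<Sum>x\<in>N. int (card (\<eta> x))) - int (card N)"
    by (simp add: sum_subtractf)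
  hence s2: "int (\<Sum>x\<in>N. card (\<eta> x)) \<le> int m - 1" using s1 cardN by simp
  have "card (\<Union>x\<in>N. \<eta> x) \<le> (\<Sum>x\<in>N. card (\<eta> x))" by (rule card_UN_le[OF finN])
  hence cu: "card (\<Union>x\<in>N. \<eta> x) < m" using s2 assms(4) by linarith
  have "\<not> {..<m} \<subseteq> (\<Union>x\<in>N. \<eta> x)"
  proof
    assume "{..<m} \<subseteq> (\<Union>x\<in>N. \<eta> x)"
    hence "card {..<m} \<le> card (\<Union>x\<in>N. \<eta> x)"
      by (rule card_mono[rotated]) (use finN finx NV in auto)
    thus False using cu by simp
  qed
  then obtain c where c: "c < m" "\<And>x. x \<in> N \<Longrightarrow> c \<notin> \<eta> x" by auto
  define \<eta>' where "\<eta>' = \<eta>(v := {c})"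
  have out: "\<And>x. x \<notin> V - {v} \<Longrightarrow> \<eta> x = {}" using hc by (auto simp: hom_cell_def)
  have edge: "\<And>x y a b. x \<in> V - {v} \<Longrightarrow> y \<in> V - {v} \<Longrightarrow> E x y \<Longrightarrow> a \<in> \<eta> x \<Longrightarrow> b \<in> \<eta> y \<Longrightarrow> a \<noteq> b"
    using hc by (auto simp: hom_cell_def induced_edges_def K_edges_def)
  have "hom_cell V E (K_verts m) K_edges \<eta>'"
    unfolding hom_cell_def K_verts_def K_edges_def \<eta>'_def
  proof (intro conjI ballI allI impI)
    fix x assume "x \<in> V" thus "(\<eta>(v := {c})) x \<noteq> {}" "(\<eta>(v := {c})) x \<subseteq> {..<m}"
      using sub c by auto
  next
    fix x assume "x \<notin> V" thus "(\<eta>(v := {c})) x = {}" using out assms(2) by auto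
  next
    fix x y a b assume xy: "x \<in> V" "y \<in> V" "E x y" and ab: "a \<in> (\<eta>(v := {c})) x" "b \<in> (\<eta>(v := {c})) y"
    show "a \<noteq> b"
    proof (cases "x = v")
      case True
      hence "y \<noteq> v" "y \<in> N" using sg xy by (auto simp: N_def)
      thus ?thesis using True ab c by auto
    next
      case False
      show ?thesis
      proof (cases "y = v")
        case True
        hence "x \<in> N" using sg xy by (auto simp: N_def)
        thus ?thesis using True False ab c by auto
      next
        case F2: False
        thus ?thesis using False xy ab edge by auto
      qed
    qed
  qed
  moreover have "\<forall>x\<in>V - {v}. \<eta>' x = \<eta> x" by (auto simp: \<eta>'_def)
  ultimately show "\<eta> \<in> Hom_I {v} V E (K_verts m) K_edges"
    using hc by (auto simp: Hom_I_def Hom_def)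
qed

end
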